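(* Let $\mathcal M=\langle Q,R,f,\mathcal I\rangle$ be a monotonic automaton with $Q\cap R=\varnothing$, and let $\langle q_0,S_0\rangle$ be a configuration. Treat elements of $Q\cup R$ as propositional variables and let $\Gamma$ be the set of implicational formulas consisting of: all atoms in $S_0\cup\{f\}$; for each instruction $q:\ \mathsf{check}\ \{s^1_1,\ldots,s^k_1\};\ \mathsf{set}\ \{s^1_2,\ldots,s^\ell_2\};\ \mathsf{jmp}\ p$ the formula $s^1_1\to\cdots\to s^k_1\to(s^1_2\to\cdots\to s^\ell_2\to p)\to q$; and for each instruction $q:\ \mathsf{jmp}\ p_1\ \mathsf{and}\ p_2$ the formula $p_1\to p_2\to q$. Then $\langle q_0,S_0\rangle$ is accepting if and only if $\Gamma\vdash q_0$ in intuitionistic implicational logic. Moreover every formula in $\Gamma$ has order at most two, so $\Gamma\to q_0$ has order at most three.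
   Context: A monotonic automaton is $\mathcal M=\langle Q,R,f,\mathcal I\rangle$ where $Q$ is a finite set of states with final state $f\in Q$, $R$ is a finite set of registers, and $\mathcal I$ is a finite set of instructions, each of the form (1) $q:\ \mathsf{check}\ S_1;\ \mathsf{set}\ S_2;\ \mathsf{jmp}\ p$, or (2) $q:\ \mathsf{jmp}\ p_1\ \mathsf{and}\ p_2$, with $q,p,p_1,p_2\in Q$ and $S_1,S_2\subseteq R$. A configuration is a pair $\langle q,S\rangle$ with $q\in Q$, $S\subseteq R$. An instruction of type (1) at state $q$ leads from $\langle q,S\rangle$ to $\langle p,S\cup S_2\rangle$ provided $S_1\subseteq S$; an instruction of type (2) at $q$ leads from $\langle q,S\rangle$ to both $\langle p_1,S\rangle$ and $\langle p_2,S\rangle$. The set of accepting configurations is the least set such that: $\langle f,S\rangle$ is accepting; $\langle q,S\rangle$ is accepting if some type (1) instruction at $q$ applies and leads to an accepting configuration; $\langle q,S\rangle$ is accepting if some type (2) instruction at $q$ leads to two configurations $\langle p_1,S\rangle,\langle p_2,S\rangle$ that are both accepting. Intuitionistic implicational logic (IIPC) has formulas built from propositional variables by $\to$ only (right-associative), with provability given by natural deduction (simply typed lambda calculus). For a finite set $\Gamma=\{\varphi_1,\ldots,\varphi_n\}$, $\Gamma\to p$ denotes $\varphi_1\to\cdots\to\varphi_n\to p$. Order: an atom has order $0$, and $r(\sigma\to\tau)=\max(r(\tau),r(\sigma)+1)$. *)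

theory Defs
  imports Main
begin

datatype 'a instr =
    Check 'a "'a set" "'a set" 'a   (* q: check S1; set S2; jmp p *)
  | Fork 'a 'a 'a                   (* q: jmp p1 and p2 *)

definition monotonic_automaton :: "'a set \<Rightarrow> 'a set \<Rightarrow> 'a \<Rightarrow> 'a instr set \<Rightarrow> bool" where
  "monotonic_automaton Q R f I \<longleftrightarrow>
     finite Q \<and> finite R \<and> f \<in> Q \<and> finite I \<and>
     (\<forall>q S1 S2 p. Check q S1 S2 p \<in> I \<longrightarrow> q \<in> Q \<and> p \<in> Q \<and> S1 \<subseteq> R \<and> S2 \<subseteq> R) \<and>
     (\<forall>q p1 p2. Fork q p1 p2 \<in> I \<longrightarrow> q \<in> Q \<and> p1 \<in> Q \<and> p2 \<in> Q)"

inductive accepting :: "'a \<Rightarrow> 'a instr set \<Rightarrow> 'a \<Rightarrow> 'a set \<Rightarrow> bool"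
  for f :: 'a and I :: "'a instr set" where
  acc_final: "accepting f I f S"
| acc_check: "\<lbrakk>Check q S1 S2 p \<in> I; S1 \<subseteq> S; accepting f I p (S \<union> S2)\<rbrakk>
               \<Longrightarrow> accepting f I q S"
| acc_fork: "\<lbrakk>Fork q p1 p2 \<in> I; accepting f I p1 S; accepting f I p2 S\<rbrakk>
               \<Longrightarrow> accepting f I q S"

datatype 'a form = Var 'a | Imp "'a form" "'a form"

inductive nd :: "'a form set \<Rightarrow> 'a form \<Rightarrow> bool" (infix "\<turnstile>" 50) where
  nd_ax: "\<phi> \<in> \<Gamma> \<Longrightarrow> \<Gamma> \<turnstile> \<phi>"
| nd_impI: "insert \<phi> \<Gamma> \<turnstile> \<psi> \<Longrightarrow> \<Gamma> \<turnstile> Imp \<phi> \<psi>"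
| nd_impE: "\<lbrakk>\<Gamma> \<turnstile> Imp \<phi> \<psi>; \<Gamma> \<turnstile> \<phi>\<rbrakk> \<Longrightarrow> \<Gamma> \<turnstile> \<psi>"

fun order :: "'a form \<Rightarrow> nat" where
  "order (Var _) = 0"
| "order (Imp \<sigma> \<tau>) = max (order \<tau>) (order \<sigma> + 1)"

fun imps :: "'a form list \<Rightarrow> 'a form \<Rightarrow> 'a form" where
  "imps [] \<psi> = \<psi>"
| "imps (\<phi> # \<phi>s) \<psi> = Imp \<phi> (imps \<phi>s \<psi>)"

definition enum_set :: "'b set \<Rightarrow> 'b list" where
  "enum_set S = (SOME xs. distinct xs \<and> set xs = S)"

definition imp_set :: "'a form set \<Rightarrow> 'a form \<Rightarrow> 'a form" where
  "imp_set \<Gamma> \<psi> = imps (enum_set \<Gamma>) \<psi>"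

fun instr_formula :: "'a instr \<Rightarrow> 'a form" where
  "instr_formula (Check q S1 S2 p) =
     imps (map Var (enum_set S1)) (Imp (imps (map Var (enum_set S2)) (Var p)) (Var q))"
| "instr_formula (Fork q p1 p2) = Imp (Var p1) (Imp (Var p2) (Var q))"

definition automaton_context :: "'a \<Rightarrow> 'a instr set \<Rightarrow> 'a set \<Rightarrow> 'a form set" where
  "automaton_context f I S0 = Var ` (S0 \<union> {f}) \<union> instr_formula ` I"

end

theory Submission
  imports Defs
begin

lemma enum_set_set: "finite S \<Longrightarrow> set (enum_set S) = S"
  unfolding enum_set_def
  by (metis (mono_tags, lifting) finite_distinct_list someI_ex)

lemma nd_mono: "\<Gamma> \<turnstile> \<phi> \<Longrightarrow> \<Gamma> \<subseteq> \<Delta> \<Longrightarrow> \<Delta> \<turnstile> \<phi>"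
proof (induction arbitrary: \<Delta> rule: nd.induct)
  case (nd_ax \<phi> \<Gamma>) then show ?case by (auto intro: nd.nd_ax)
next
  case (nd_impI \<phi> \<Gamma> \<psi>) then show ?case by (meson insert_mono nd.nd_impI)
next
  case (nd_impE \<Gamma> \<phi> \<psi>) then show ?case by (meson nd.nd_impE)
qed

lemma imps_intro: "set ps \<union> \<Delta> \<turnstile> \<psi> \<Longrightarrow> \<Delta> \<turnstile> imps ps \<psi>"
proof (induction ps arbitrary: \<Delta>)
  case Nil then show ?case by simp
next
  case (Cons p ps)
  have "set ps \<union> insert p \<Delta> = set (p#ps) \<union> \<Delta>" by auto
  with Cons have "insert p \<Delta> \<turnstile> imps ps \<psi>" by metis
  then show ?case by (simp add: nd_impI)
qed

lemma imps_elim: "\<Delta> \<turnstile> imps ps \<psi> \<Longrightarrow> \<forall>p\<in>set ps. \<Delta> \<turnstile> p \<Longrightarrow> \<Delta> \<turnstile> \<psi>"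
  by (induction ps) (auto intro: nd_impE)

lemma complete:
  assumes "accepting f I q S"
  shows "Var ` S \<subseteq> \<Delta> \<Longrightarrow> instr_formula ` I \<subseteq> \<Delta> \<Longrightarrow> Var f \<in> \<Delta> \<Longrightarrow> finite S \<Longrightarrow>
     (\<forall>q S1 S2 p. Check q S1 S2 p \<in> I \<longrightarrow> finite S1 \<and> finite S2) \<Longrightarrow> \<Delta> \<turnstile> Var q"
  using assms
proof (induction arbitrary: \<Delta> rule: accepting.induct)
  case (acc_final S) then show ?case by (simp add: nd_ax)
next
  case (acc_check q S1 S2 p S)
  note P = acc_check.prems and H = acc_check.hyps
  have fin: "finite S1" "finite S2" using P(5) H(1) by blast+
  have h1: "\<Delta> \<turnstile> instr_formula (Check q S1 S2 p)"
    using P(2) H(1) by (blast intro: nd_ax)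
  have e2: "set (map Var (enum_set S2)) = Var ` S2" using enum_set_set[OF fin(2)] by simp
  have "set (map Var (enum_set S2)) \<union> \<Delta> \<turnstile> Var p"
  proof (rule acc_check.IH)
    show "Var ` (S \<union> S2) \<subseteq> set (map Var (enum_set S2)) \<union> \<Delta>" using e2 P(1) by blast
    show "instr_formula ` I \<subseteq> set (map Var (enum_set S2)) \<union> \<Delta>" using P(2) by blast
    show "Var f \<in> set (map Var (enum_set S2)) \<union> \<Delta>" using P(3) by blast
    show "finite (S \<union> S2)" using P(4) fin by blast
    show "\<forall>q S1 S2 p. Check q S1 S2 p \<in> I \<longrightarrow> finite S1 \<and> finite S2" using P(5) .
  qed
  then have h2: "\<Delta> \<turnstile> imps (map Var (enum_set S2)) (Var p)" by (rule imps_intro)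
  have "\<forall>x\<in>set (map Var (enum_set S1)). \<Delta> \<turnstile> x"
    using P(1) H(2) enum_set_set[OF fin(1)] by (auto intro: nd_ax)
  then have "\<Delta> \<turnstile> Imp (imps (map Var (enum_set S2)) (Var p)) (Var q)"
    using h1 imps_elim by (metis instr_formula.simps(1))
  then show ?case using h2 by (rule nd_impE)
next
  case (acc_fork q p1 p2 S)
  note P = acc_fork.prems
  have "\<Delta> \<turnstile> Imp (Var p1) (Imp (Var p2) (Var q))"
    using P(2) acc_fork.hyps(1) by (metis image_subset_iff instr_formula.simps(2) nd_ax)
  moreover have "\<Delta> \<turnstile> Var p1" using acc_fork.IH(1)[OF P] .
  moreover have "\<Delta> \<turnstile> Var p2" using acc_fork.IH(2)[OF P] .
  ultimately show ?case by (meson nd_impE)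
qed

definition val :: "'a set \<Rightarrow> 'a \<Rightarrow> 'a instr set \<Rightarrow> 'a set \<Rightarrow> 'a \<Rightarrow> bool" where
  "val Q f I T a = (if a \<in> Q then accepting f I a T else a \<in> T)"

fun forces :: "'a set \<Rightarrow> 'a \<Rightarrow> 'a instr set \<Rightarrow> 'a set \<Rightarrow> 'a form \<Rightarrow> bool" where
  "forces Q f I T (Var a) = val Q f I T a"
| "forces Q f I T (Imp \<phi> \<psi>) = (\<forall>T'. T \<subseteq> T' \<longrightarrow> forces Q f I T' \<phi> \<longrightarrow> forces Q f I T' \<psi>)"

lemma acc_mono: "accepting f I q S \<Longrightarrow> S \<subseteq> T \<Longrightarrow> accepting f I q T"
proof (induction arbitrary: T rule: accepting.induct)
  case (acc_final S) show ?case by (rule accepting.acc_final)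
next
  case (acc_check q S1 S2 p S)
  have "S1 \<subseteq> T" using acc_check.hyps(2) acc_check.prems by blast
  moreover have "S \<union> S2 \<subseteq> T \<union> S2" using acc_check.prems by blast
  then have "accepting f I p (T \<union> S2)" by (rule acc_check.IH)
  ultimately show ?case by (rule accepting.acc_check[OF acc_check.hyps(1)])
next
  case (acc_fork q p1 p2 S) then show ?case by (meson accepting.acc_fork)
qed

lemma val_mono: "val Q f I T a \<Longrightarrow> T \<subseteq> T' \<Longrightarrow> val Q f I T' a"
  unfolding val_def using acc_mono by (auto split: if_splits)

lemma forces_mono: "forces Q f I T \<phi> \<Longrightarrow> T \<subseteq> T' \<Longrightarrow> forces Q f I T' \<phi>"
proof (induction \<phi> arbitrary: T T')
  case (Var x)
  then have "val Q f I T x" by simp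
  then have "val Q f I T' x" using Var.prems(2) by (rule val_mono)
  then show ?case by simp
next
  case (Imp a b)
  show ?case
  proof (simp only: forces.simps, intro allI impI)
    fix T'' assume "T' \<subseteq> T''" "forces Q f I T'' a"
    moreover have "T \<subseteq> T''" using Imp.prems(2) \<open>T' \<subseteq> T''\<close> by (rule order_trans)
    moreover have "\<forall>T''. T \<subseteq> T'' \<longrightarrow> forces Q f I T'' a \<longrightarrow> forces Q f I T'' b"
      using Imp.prems(1) by (simp only: forces.simps)
    ultimately show "forces Q f I T'' b" by blast
  qed
qed

lemma sound: "\<Gamma> \<turnstile> \<phi> \<Longrightarrow> (\<forall>\<gamma>\<in>\<Gamma>. forces Q f I T \<gamma>) \<Longrightarrow> forces Q f I T \<phi>"
proof (induction arbitrary: T rule: nd.induct)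
  case (nd_ax \<phi> \<Gamma>) then show ?case by blast
next
  case (nd_impI \<phi> \<Gamma> \<psi>)
  show ?case
  proof (simp only: forces.simps, intro allI impI)
    fix T' assume T': "T \<subseteq> T'" "forces Q f I T' \<phi>"
    have "\<forall>\<gamma>\<in>insert \<phi> \<Gamma>. forces Q f I T' \<gamma>"
    proof
      fix \<gamma> assume "\<gamma> \<in> insert \<phi> \<Gamma>"
      then consider "\<gamma> = \<phi>" | "\<gamma> \<in> \<Gamma>" by blast
      then show "forces Q f I T' \<gamma>"
      proof cases
        case 1 then show ?thesis using T'(2) by simp
      next
        case 2
        then have "forces Q f I T \<gamma>" using nd_impI.prems by blast
        then show ?thesis using T'(1) by (rule forces_mono)
      qed
    qed
    then show "forces Q f I T' \<psi>" by (rule nd_impI.IH)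
  qed
next
  case (nd_impE \<Gamma> \<phi> \<psi>)
  have a: "forces Q f I T (Imp \<phi> \<psi>)" using nd_impE.IH(1) nd_impE.prems .
  have b: "forces Q f I T \<phi>" using nd_impE.IH(2) nd_impE.prems .
  from a have "\<forall>T'. T \<subseteq> T' \<longrightarrow> forces Q f I T' \<phi> \<longrightarrow> forces Q f I T' \<psi>"
    by (simp only: forces.simps)
  then show ?case using b by blast
qed

lemma forces_imps: "forces Q f I T (imps (map Var xs) \<psi>) \<longleftrightarrow>
   (\<forall>T'. T \<subseteq> T' \<longrightarrow> (\<forall>x\<in>set xs. val Q f I T' x) \<longrightarrow> forces Q f I T' \<psi>)"
proof (induction xs arbitrary: T)
  case Nil
  show ?case
  proof
    assume "forces Q f I T (imps (map Var []) \<psi>)"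
    then have h: "forces Q f I T \<psi>" by simp
    show "\<forall>T'. T \<subseteq> T' \<longrightarrow> (\<forall>x\<in>set []. val Q f I T' x) \<longrightarrow> forces Q f I T' \<psi>"
    proof (intro allI impI)
      fix T' assume "T \<subseteq> T'"
      with h show "forces Q f I T' \<psi>" by (rule forces_mono)
    qed
  next
    assume "\<forall>T'. T \<subseteq> T' \<longrightarrow> (\<forall>x\<in>set []. val Q f I T' x) \<longrightarrow> forces Q f I T' \<psi>"
    then have "T \<subseteq> T \<longrightarrow> (\<forall>x\<in>set []. val Q f I T x) \<longrightarrow> forces Q f I T \<psi>" by (rule spec)
    then have "forces Q f I T \<psi>" by simp
    then show "forces Q f I T (imps (map Var []) \<psi>)" by simp
  qed
next
  case (Cons x xs)
  have eq: "forces Q f I T (imps (map Var (x # xs)) \<psi>) \<longleftrightarrow>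
     (\<forall>T'. T \<subseteq> T' \<longrightarrow> val Q f I T' x \<longrightarrow>
        (\<forall>T''. T' \<subseteq> T'' \<longrightarrow> (\<forall>y\<in>set xs. val Q f I T'' y) \<longrightarrow> forces Q f I T'' \<psi>))"
    by (simp only: list.map imps.simps forces.simps Cons.IH)
  show ?case
  proof
    assume "forces Q f I T (imps (map Var (x # xs)) \<psi>)"
    then have H: "\<forall>T'. T \<subseteq> T' \<longrightarrow> val Q f I T' x \<longrightarrow>
        (\<forall>T''. T' \<subseteq> T'' \<longrightarrow> (\<forall>y\<in>set xs. val Q f I T'' y) \<longrightarrow> forces Q f I T'' \<psi>)"
      by (rule iffD1[OF eq])
    show "\<forall>T'. T \<subseteq> T' \<longrightarrow> (\<forall>x\<in>set (x # xs). val Q f I T' x) \<longrightarrow> forces Q f I T' \<psi>"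
    proof (intro allI impI)
      fix T' assume a: "T \<subseteq> T'" "\<forall>y\<in>set (x # xs). val Q f I T' y"
      have v: "val Q f I T' x" and vs: "\<forall>y\<in>set xs. val Q f I T' y" using a(2) by simp_all
      have h1: "val Q f I T' x \<longrightarrow>
        (\<forall>T''. T' \<subseteq> T'' \<longrightarrow> (\<forall>y\<in>set xs. val Q f I T'' y) \<longrightarrow> forces Q f I T'' \<psi>)"
        using spec[OF H, of T'] a(1) by (rule mp)
      have h2: "\<forall>T''. T' \<subseteq> T'' \<longrightarrow> (\<forall>y\<in>set xs. val Q f I T'' y) \<longrightarrow> forces Q f I T'' \<psi>"
        using h1 v by (rule mp)
      have h3: "(\<forall>y\<in>set xs. val Q f I T' y) \<longrightarrow> forces Q f I T' \<psi>"
        using spec[OF h2, of T'] order_refl by (rule mp)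
      show "forces Q f I T' \<psi>" using h3 vs by (rule mp)
    qed
  next
    assume H: "\<forall>T'. T \<subseteq> T' \<longrightarrow> (\<forall>x\<in>set (x # xs). val Q f I T' x) \<longrightarrow> forces Q f I T' \<psi>"
    have "\<forall>T'. T \<subseteq> T' \<longrightarrow> val Q f I T' x \<longrightarrow>
        (\<forall>T''. T' \<subseteq> T'' \<longrightarrow> (\<forall>y\<in>set xs. val Q f I T'' y) \<longrightarrow> forces Q f I T'' \<psi>)"
    proof (intro allI impI)
      fix T' T'' assume a: "T \<subseteq> T'" "val Q f I T' x" "T' \<subseteq> T''" "\<forall>y\<in>set xs. val Q f I T'' y"
      have "val Q f I T'' x" using a(2,3) by (rule val_mono)
      then have b: "\<forall>y\<in>set (x # xs). val Q f I T'' y" using a(4) by simp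
      have c: "T \<subseteq> T''" using a(1,3) by (rule order_trans)
      have k: "(\<forall>y\<in>set (x # xs). val Q f I T'' y) \<longrightarrow> forces Q f I T'' \<psi>"
        using spec[OF H, of T''] c by (rule mp)
      show "forces Q f I T'' \<psi>" using k b by (rule mp)
    qed
    then show "forces Q f I T (imps (map Var (x # xs)) \<psi>)" by (rule iffD2[OF eq])
  qed
qed

lemma order_imps: "\<forall>p\<in>set ps. order p \<le> n \<Longrightarrow> order \<psi> \<le> Suc n \<Longrightarrow> order (imps ps \<psi>) \<le> Suc n"
  by (induction ps) auto

lemma order_imps_var: "order (imps (map Var xs) \<psi>) \<le> max (order \<psi>) 1"
  by (induction xs) auto

theorem lemma3p9:
  fixes Q R :: "'a set" and f q0 :: 'a and I :: "'a instr set" and S0 :: "'a set"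
  assumes "monotonic_automaton Q R f I"
    and "Q \<inter> R = {}"
    and "q0 \<in> Q" and "S0 \<subseteq> R"
  shows "(accepting f I q0 S0 \<longleftrightarrow> automaton_context f I S0 \<turnstile> Var q0)
       \<and> (\<forall>\<phi> \<in> automaton_context f I S0. order \<phi> \<le> 2)
       \<and> order (imp_set (automaton_context f I S0) (Var q0)) \<le> 3"
proof -
  note M = assms(1)[unfolded monotonic_automaton_def]
  have finR: "finite R" and finI: "finite I" and fQ: "f \<in> Q" using M by blast+
  have chk: "\<And>q S1 S2 p. Check q S1 S2 p \<in> I \<Longrightarrow> q \<in> Q \<and> p \<in> Q \<and> S1 \<subseteq> R \<and> S2 \<subseteq> R"
    using M by blast
  have frk: "\<And>q p1 p2. Fork q p1 p2 \<in> I \<Longrightarrow> q \<in> Q \<and> p1 \<in> Q \<and> p2 \<in> Q"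
    using M by blast
  have finS0: "finite S0" using finite_subset[OF assms(4) finR] .
  have finSS: "\<forall>q S1 S2 p. Check q S1 S2 p \<in> I \<longrightarrow> finite S1 \<and> finite S2"
  proof (intro allI impI)
    fix q S1 S2 p assume "Check q S1 S2 p \<in> I"
    then have "S1 \<subseteq> R" "S2 \<subseteq> R" using chk by blast+
    then show "finite S1 \<and> finite S2" using finite_subset finR by blast
  qed
  have A: "automaton_context f I S0 \<turnstile> Var q0" if "accepting f I q0 S0"
  proof (rule complete[OF that _ _ _ finS0 finSS])
    show "Var ` S0 \<subseteq> automaton_context f I S0" unfolding automaton_context_def by blast
    show "instr_formula ` I \<subseteq> automaton_context f I S0" unfolding automaton_context_def by blast
    show "Var f \<in> automaton_context f I S0" unfolding automaton_context_def by blast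
  qed
  have B: "accepting f I q0 S0" if H: "automaton_context f I S0 \<turnstile> Var q0"
  proof -
    have "\<forall>\<gamma>\<in>automaton_context f I S0. forces Q f I S0 \<gamma>"
    proof
      fix \<gamma> assume "\<gamma> \<in> automaton_context f I S0"
      then consider a where "a \<in> S0 \<union> {f}" "\<gamma> = Var a" | i where "i \<in> I" "\<gamma> = instr_formula i"
        unfolding automaton_context_def by blast
      then show "forces Q f I S0 \<gamma>"
      proof cases
        case 1
        show ?thesis
        proof (cases "a = f")
          case True then show ?thesis using 1 fQ by (simp add: val_def accepting.acc_final)
        next
          case False
          then have "a \<in> S0" "a \<notin> Q" using 1 assms(2,4) by blast+
          then show ?thesis using 1 by (simp add: val_def)
        qed
      next
        case 2
        show ?thesis
        proof (cases i)
          case (Check q S1 S2 p)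
          have I: "Check q S1 S2 p \<in> I" using 2 Check by simp
          have q: "q \<in> Q" "p \<in> Q" and S1: "S1 \<subseteq> R" and S2: "S2 \<subseteq> R" using chk[OF I] by blast+
          have S1f: "finite S1" and S2f: "finite S2" using finSS I by blast+
          show ?thesis unfolding 2 Check instr_formula.simps forces_imps
          proof (intro allI impI)
            fix T' assume T': "S0 \<subseteq> T'" "\<forall>x\<in>set (enum_set S1). val Q f I T' x"
            have "S1 \<subseteq> T'"
            proof
              fix x assume x: "x \<in> S1"
              then have "val Q f I T' x" using T'(2) enum_set_set[OF S1f] by blast
              moreover have "x \<notin> Q" using x S1 assms(2) by blast
              ultimately show "x \<in> T'" by (simp add: val_def)
            qed
            show "forces Q f I T' (Imp (imps (map Var (enum_set S2)) (Var p)) (Var q))"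
            proof (simp only: forces.simps, intro allI impI)
              fix T'' assume T'': "T' \<subseteq> T''" "forces Q f I T'' (imps (map Var (enum_set S2)) (Var p))"
              have "\<forall>x\<in>set (enum_set S2). val Q f I (T'' \<union> S2) x"
              proof
                fix x assume "x \<in> set (enum_set S2)"
                then have x: "x \<in> S2" using enum_set_set[OF S2f] by blast
                then have "x \<notin> Q" using S2 assms(2) by blast
                then show "val Q f I (T'' \<union> S2) x" using x by (simp add: val_def)
              qed
              moreover have "T'' \<subseteq> T'' \<union> S2" by blast
              ultimately have "forces Q f I (T'' \<union> S2) (Var p)"
                using T''(2) unfolding forces_imps by blast
              then have "accepting f I p (T'' \<union> S2)" using q(2) by (simp add: val_def)
              moreover have "S1 \<subseteq> T''" using \<open>S1 \<subseteq> T'\<close> T''(1) by blast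
              ultimately have "accepting f I q T''"
                by (rule accepting.acc_check[OF I, rotated])
              then show "val Q f I T'' q" using q(1) by (simp add: val_def)
            qed
          qed
        next
          case (Fork q p1 p2)
          have I: "Fork q p1 p2 \<in> I" using 2 Fork by simp
          have q: "q \<in> Q" "p1 \<in> Q" "p2 \<in> Q" using frk[OF I] by blast+
          show ?thesis unfolding 2 Fork instr_formula.simps
          proof (simp only: forces.simps, intro allI impI)
            fix T' T'' assume a: "S0 \<subseteq> T'" "val Q f I T' p1" "T' \<subseteq> T''" "val Q f I T'' p2"
            have "accepting f I p1 T'" using a(2) q(2) by (simp add: val_def)
            then have "accepting f I p1 T''" using a(3) by (rule acc_mono)
            moreover have "accepting f I p2 T''" using a(4) q(3) by (simp add: val_def)
            ultimately have "accepting f I q T''" by (rule accepting.acc_fork[OF I])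
            then show "val Q f I T'' q" using q(1) by (simp add: val_def)
          qed
        qed
      qed
    qed
    then have "forces Q f I S0 (Var q0)" by (rule sound[OF H])
    then show ?thesis using assms(3) by (simp add: val_def)
  qed
  have C: "\<forall>\<phi> \<in> automaton_context f I S0. order \<phi> \<le> 2"
  proof
    fix \<phi> assume "\<phi> \<in> automaton_context f I S0"
    then consider a where "\<phi> = Var a" | i where "\<phi> = instr_formula i"
      unfolding automaton_context_def by blast
    then show "order \<phi> \<le> 2"
    proof cases
      case 1 then show ?thesis by simp
    next
      case 2
      show ?thesis
      proof (cases i)
        case (Check q S1 S2 p)
        have "order (imps (map Var (enum_set S2)) (Var p)) \<le> 1"
          using order_imps_var[of "enum_set S2" "Var p"] by simp
        then have o: "order (Imp (imps (map Var (enum_set S2)) (Var p)) (Var q)) \<le> 2" by simp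
        have "order \<phi> \<le> max (order (Imp (imps (map Var (enum_set S2)) (Var p)) (Var q))) 1"
          unfolding 2 Check instr_formula.simps by (rule order_imps_var)
        then show ?thesis using o by linarith
      next
        case (Fork q p1 p2) then show ?thesis using 2 by simp
      qed
    qed
  qed
  have fin: "finite (automaton_context f I S0)"
    using finS0 finI by (simp add: automaton_context_def)
  have "order (imps (enum_set (automaton_context f I S0)) (Var q0)) \<le> Suc 2"
    by (rule order_imps) (use C enum_set_set[OF fin] in auto)
  then have D: "order (imp_set (automaton_context f I S0) (Var q0)) \<le> 3"
    unfolding imp_set_def by simp
  have E: "accepting f I q0 S0 \<longleftrightarrow> automaton_context f I S0 \<turnstile> Var q0"
    by (rule iffI) (erule A, erule B)
  show ?thesis by (intro conjI E C D)
qed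

end
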